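(* Let $L$ be an infinite field, let $\mathcal{T}$ be a non-discrete system of topologies over $L$, let $K$ be a proper subfield of $L$, let $m\ge 1$, and let $O$ be a nonempty $\mathcal{T}$-open subset of $L^m = \mathbb{A}^m_L(L)$. Then $|O \setminus K^m| = |L|$.
   Context: An $L$-variety is a separated $L$-scheme of finite type (not necessarily reduced); $V(L)$ denotes its set of $L$-points. A system of topologies $\mathcal{T}$ over $L$ is a choice of topology on $V(L)$ for every $L$-variety $V$ such that for every morphism $f: V \to W$ of $L$-varieties: (1) the induced map $V(L) \to W(L)$ is continuous; (2) if $f$ is an open immersion then $V(L) \to W(L)$ is a topological open embedding; (3) if $f$ is a closed immersion then $V(L)\to W(L)$ is a topological closed embedding. $\mathcal{T}$ is called discrete if the $\mathcal{T}$-topology on $L = \mathbb{A}^1_L(L)$ is discrete, and non-discrete otherwise. *)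

theory Defs
  imports "HOL-Analysis.Analysis" "HOL-Library.Equipollence"
begin

definition affine_space :: "nat \<Rightarrow> 'a list set" where
  "affine_space n = {x. length x = n}"

inductive polyfun :: "nat \<Rightarrow> ('a::field list \<Rightarrow> 'a) \<Rightarrow> bool" for n where
  pf_const: "polyfun n (\<lambda>x. c)"
| pf_var: "i < n \<Longrightarrow> polyfun n (\<lambda>x. x ! i)"
| pf_add: "polyfun n f \<Longrightarrow> polyfun n g \<Longrightarrow> polyfun n (\<lambda>x. f x + g x)"
| pf_mult: "polyfun n f \<Longrightarrow> polyfun n g \<Longrightarrow> polyfun n (\<lambda>x. f x * g x)"

text \<open>Sets of L-points of closed subschemes of affine n-space (zero sets of families of polynomials).\<close>

definition algebraic :: "nat \<Rightarrow> 'a::field list set \<Rightarrow> bool" where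
  "algebraic n X \<longleftrightarrow> (\<exists>F. (\<forall>f\<in>F. polyfun n f) \<and>
      X = {x \<in> affine_space n. \<forall>f\<in>F. f x = 0})"

definition polymap :: "nat \<Rightarrow> nat \<Rightarrow> ('a::field list \<Rightarrow> 'a) list \<Rightarrow> bool" where
  "polymap n k g \<longleftrightarrow> length g = k \<and> (\<forall>f\<in>set g. polyfun n f)"

definition apply_polymap :: "('a list \<Rightarrow> 'a) list \<Rightarrow> 'a list \<Rightarrow> 'a list" where
  "apply_polymap g x = map (\<lambda>f. f x) g"

text \<open>The affine chart X_f = {(x,t) : x \<in> X, f(x) t = 1} in L^(n+1), i.e. the L-points of the
  basic open subscheme D(f) of X, which maps onto {x \<in> X. f x \<noteq> 0} by dropping the last coordinate.\<close>

definition chart :: "'a::field list set \<Rightarrow> ('a list \<Rightarrow> 'a) \<Rightarrow> 'a list set" where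
  "chart X f = {x @ [t] | x t. x \<in> X \<and> f x * t = 1}"

text \<open>A system of topologies over L, restricted to affine L-varieties (represented by their sets of
  L-points inside L^n).  T n X is the topology on X(L) for an algebraic subset X of L^n.
  Axioms: (1) morphisms (polynomial maps) are continuous; (3) closed immersions of affine
  varieties (inclusions of algebraic subsets) are closed topological embeddings; (2) the
  basic open immersions D(f) \<rightarrow> X are open topological embeddings.\<close>

definition affine_system_of_topologies ::
    "(nat \<Rightarrow> 'a::field list set \<Rightarrow> 'a list topology) \<Rightarrow> bool" where
  "affine_system_of_topologies T \<longleftrightarrow>
     (\<forall>n X. algebraic n X \<longrightarrow> topspace (T n X) = X)
   \<and> (\<forall>n k X Y g. algebraic n X \<and> algebraic k Y \<and> polymap n k g \<and> apply_polymap g ` X \<subseteq> Y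
        \<longrightarrow> continuous_map (T n X) (T k Y) (apply_polymap g))
   \<and> (\<forall>n X Y. algebraic n X \<and> algebraic n Y \<and> X \<subseteq> Y
        \<longrightarrow> T n X = subtopology (T n Y) X \<and> closedin (T n Y) X)
   \<and> (\<forall>n X f. algebraic n X \<and> polyfun n f
        \<longrightarrow> openin (T n X) {x \<in> X. f x \<noteq> 0}
          \<and> homeomorphic_map (T (Suc n) (chart X f))
               (subtopology (T n X) {x \<in> X. f x \<noteq> 0}) (take n))"

definition non_discrete :: "(nat \<Rightarrow> 'a list set \<Rightarrow> 'a list topology) \<Rightarrow> bool" where
  "non_discrete T \<longleftrightarrow> T 1 (affine_space 1) \<noteq> discrete_topology (affine_space 1)"

definition is_subfield :: "'a::field set \<Rightarrow> bool" where
  "is_subfield K \<longleftrightarrow> 0 \<in> K \<and> 1 \<in> K \<and> (\<forall>x\<in>K. \<forall>y\<in>K. x + y \<in> K \<and> x * y \<in> K)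
     \<and> (\<forall>x\<in>K. - x \<in> K) \<and> (\<forall>x\<in>K. x \<noteq> 0 \<longrightarrow> inverse x \<in> K)"

end

theory Submission
  imports Defs
begin

lemma times_self_lepoll: "infinite (S::'b set) \<Longrightarrow> S \<times> S \<lesssim> S"
  using card_of_Times_same_infinite eqpoll_iff_card_of_ordIso eqpoll_imp_lepoll by blast

lemma alg_space: "algebraic n (affine_space n :: 'a::field list set)"
  unfolding algebraic_def by (rule exI[of _ "{}"]) auto

lemma A1_elem: "x \<in> affine_space (Suc 0) \<Longrightarrow> x = [x!0]"
  unfolding affine_space_def by (cases x) auto

lemma A1_Cons: "[t] \<in> affine_space (Suc 0)"
  unfolding affine_space_def by auto

lemma alg_point: "algebraic 1 {[a::'a::field]}"
proof -
  have pf: "polyfun 1 (\<lambda>x::'a list. x!0 + (- a))"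
    using pf_add[OF pf_var[of 0 1] pf_const[of 1 "-a"]] by simp
  have "{[a]} = {x \<in> affine_space 1. \<forall>f\<in>{\<lambda>x::'a list. x!0 + (- a)}. f x = 0}"
  proof (rule set_eqI, rule iffI)
    fix x assume "x \<in> {[a]}" then show "x \<in> {x \<in> affine_space 1. \<forall>f\<in>{\<lambda>x::'a list. x!0 + (- a)}. f x = 0}"
      by (auto simp: affine_space_def)
  next
    fix x assume x: "x \<in> {x \<in> affine_space 1. \<forall>f\<in>{\<lambda>x::'a list. x!0 + (- a)}. f x = 0}"
    then have "x = [x!0]" using A1_elem by auto
    moreover have "x!0 = a" using x by (simp add: eq_neg_iff_add_eq_0)
    ultimately show "x \<in> {[a]}" by simp
  qed
  then show ?thesis unfolding algebraic_def using pf by blast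
qed

lemma affine_cont:
  assumes T: "affine_system_of_topologies T"
  shows "continuous_map (T 1 (affine_space 1)) (T 1 (affine_space 1)) (\<lambda>x::'a::field list. [a * x!0 + b])"
proof -
  have pf: "polyfun 1 (\<lambda>x::'a list. a * x!0 + b)"
    using pf_add[OF pf_mult[OF pf_const[of 1 a] pf_var[of 0 1]] pf_const[of 1 b]] by simp
  have pm: "polymap 1 1 [\<lambda>x::'a list. a * x!0 + b]" using pf by (simp add: polymap_def)
  have eq: "apply_polymap [\<lambda>x::'a list. a * x!0 + b] = (\<lambda>x. [a * x!0 + b])"
    by (auto simp: apply_polymap_def)
  have "apply_polymap [\<lambda>x::'a list. a * x!0 + b] ` affine_space 1 \<subseteq> affine_space 1"
    unfolding eq by (auto simp: affine_space_def)
  moreover have c: "\<forall>n k X Y g. algebraic n X \<and> algebraic k Y \<and> polymap n k g \<and> apply_polymap g ` X \<subseteq> Y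
        \<longrightarrow> continuous_map (T n X) (T k Y) (apply_polymap g)"
    using T unfolding affine_system_of_topologies_def by blast
  ultimately show ?thesis unfolding eq[symmetric] using pm alg_space by blast
qed

lemma line_cont:
  assumes T: "affine_system_of_topologies T" and lp: "length p = m" and m: "m \<ge> 1"
  shows "continuous_map (T 1 (affine_space 1)) (T m (affine_space m)) (\<lambda>x::'a::field list. x!0 # tl p)"
proof -
  let ?g = "(\<lambda>x::'a list. x!0) # map (\<lambda>c. \<lambda>x. c) (tl p)"
  have pm: "polymap 1 m ?g" using lp m pf_var[of 0 1] by (auto simp: polymap_def pf_const)
  have eq: "apply_polymap ?g = (\<lambda>x. x!0 # tl p)"
    by (auto simp: apply_polymap_def comp_def)
  have "apply_polymap ?g ` affine_space 1 \<subseteq> affine_space m"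
    unfolding eq using lp m by (auto simp: affine_space_def)
  moreover have c: "\<forall>n k X Y g. algebraic n X \<and> algebraic k Y \<and> polymap n k g \<and> apply_polymap g ` X \<subseteq> Y
        \<longrightarrow> continuous_map (T n X) (T k Y) (apply_polymap g)"
    using T unfolding affine_system_of_topologies_def by blast
  ultimately show ?thesis unfolding eq[symmetric] using pm alg_space by blast
qed

lemma point_closed:
  assumes T: "affine_system_of_topologies T"
  shows "closedin (T 1 (affine_space 1)) {[a::'a::field]}"
proof -
  have c: "\<forall>n X Y. algebraic n X \<and> algebraic n Y \<and> X \<subseteq> Y
        \<longrightarrow> T n X = subtopology (T n Y) X \<and> closedin (T n Y) X"
    using T unfolding affine_system_of_topologies_def by blast
  have "{[a]} \<subseteq> affine_space 1" by (simp add: affine_space_def)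
  then show ?thesis using c alg_point[of a] alg_space[of 1] by blast
qed

lemma topspace1:
  assumes T: "affine_system_of_topologies T"
  shows "topspace (T n (affine_space n)) = (affine_space n :: 'a::field list set)"
proof -
  have c: "\<forall>n X. algebraic n X \<longrightarrow> topspace (T n X) = X"
    using T unfolding affine_system_of_topologies_def by blast
  then show ?thesis using alg_space by blast
qed


lemma lepoll_finite_imp: "A \<lesssim> B \<Longrightarrow> finite B \<Longrightarrow> finite A"
  unfolding lepoll_def using inj_on_finite by blast

lemma subfield_diff: "is_subfield K \<Longrightarrow> x \<in> K \<Longrightarrow> y \<in> K \<Longrightarrow> x - y \<in> K"
  unfolding is_subfield_def by (metis diff_conv_add_uminus)

lemma subfield_div: "is_subfield K \<Longrightarrow> x \<in> K \<Longrightarrow> y \<in> K \<Longrightarrow> x / y \<in> K"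
  unfolding is_subfield_def by (metis divide_inverse inverse_zero)

lemma no_isolated:
  assumes T: "affine_system_of_topologies T" and nd: "non_discrete T"
    and V: "openin (T 1 (affine_space 1)) V" and q: "[q::'a::field] \<in> V"
  shows "V \<noteq> {[q]}"
proof
  assume Vq: "V = {[q]}"
  have ts: "topspace (T 1 (affine_space 1)) = (affine_space 1 :: 'a list set)"
    using topspace1[OF T] by blast
  have "openin (T 1 (affine_space 1)) {x}" if x: "x \<in> affine_space 1" for x :: "'a list"
  proof -
    let ?a = "x!0"
    have "openin (T 1 (affine_space 1)) {y \<in> topspace (T 1 (affine_space 1)). [1 * y!0 + (q - ?a)] \<in> V}"
      using openin_continuous_map_preimage[OF affine_cont[OF T] V] by blast
    moreover have "{y \<in> topspace (T 1 (affine_space 1)). [1 * y!0 + (q - ?a)] \<in> V} = {x}"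
    proof (rule set_eqI, rule iffI)
      fix y assume "y \<in> {y \<in> topspace (T 1 (affine_space 1)). [1 * y!0 + (q - ?a)] \<in> V}"
      then have y: "y \<in> affine_space 1" "y!0 = ?a" using ts Vq by auto
      then show "y \<in> {x}" using A1_elem[of y] A1_elem[of x] x by simp
    next
      fix y assume "y \<in> {x}" then show "y \<in> {y \<in> topspace (T 1 (affine_space 1)). [1 * y!0 + (q - ?a)] \<in> V}"
        using ts x Vq by auto
    qed
    ultimately show ?thesis by simp
  qed
  then have "discrete_topology (affine_space 1) = T 1 (affine_space 1)"
    using ts discrete_topology_unique by blast
  then show False using nd unfolding non_discrete_def by simp
qed

lemma lemA:
  assumes T: "affine_system_of_topologies T" and nd: "non_discrete T"
    and V: "openin (T 1 (affine_space 1)) V" and q: "[q::'a::field] \<in> V"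
  shows "\<exists>x. [x] \<in> V \<and> x \<noteq> q \<and> [a * (x - q) + q] \<in> V"
proof -
  have ts: "topspace (T 1 (affine_space 1)) = (affine_space 1 :: 'a list set)"
    using topspace1[OF T] by blast
  define W where "W = {y \<in> topspace (T 1 (affine_space 1)). [a * y!0 + (q - a * q)] \<in> V} \<inter> V"
  have Wo: "openin (T 1 (affine_space 1)) W"
    unfolding W_def using openin_continuous_map_preimage[OF affine_cont[OF T] V] V by blast
  have qW: "[q] \<in> W" unfolding W_def using q ts A1_Cons by (auto simp: algebra_simps)
  have "openin (T 1 (affine_space 1)) (W - {[q]})"
    using openin_diff[OF Wo point_closed[OF T]] by blast
  moreover have "W - {[q]} \<noteq> {}"
  proof
    assume "W - {[q]} = {}" then have "W = {[q]}" using qW by blast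
    then show False using no_isolated[OF T nd Wo qW] by blast
  qed
  then obtain y where y: "y \<in> W" "y \<noteq> [q]" by blast
  then have yA: "y \<in> affine_space 1" using ts W_def by auto
  have "y = [y!0]" using A1_elem yA by (metis One_nat_def)
  then show ?thesis using y unfolding W_def
    by (intro exI[of _ "y!0"]) (auto simp: algebra_simps)
qed


lemma lower1:
  fixes T :: "nat \<Rightarrow> 'a::field list set \<Rightarrow> 'a list topology"
  assumes T: "affine_system_of_topologies T" and nd: "non_discrete T"
    and inf: "infinite (UNIV :: 'a set)"
    and K: "is_subfield K" and KU: "K \<noteq> UNIV"
    and V: "openin (T 1 (affine_space 1)) V" and Vne: "V \<noteq> {}"
  shows "(UNIV :: 'a set) \<lesssim> {t. [t] \<in> V \<and> t \<notin> K}"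
proof -
  define S where "S = {t. [t] \<in> V \<and> t \<notin> K}"
  have ts: "topspace (T 1 (affine_space 1)) = (affine_space 1 :: 'a list set)"
    using topspace1[OF T] by blast
  have VA: "V \<subseteq> affine_space 1" using openin_subset[OF V] ts by simp
  obtain c where c: "c \<notin> K" using KU by blast
  have c0: "c \<noteq> 0" using c K unfolding is_subfield_def by auto
  obtain q V' where V': "openin (T 1 (affine_space 1)) V'" and qV': "[q] \<in> V'"
    and hz: "\<forall>z. [z] \<in> V' \<and> z \<noteq> q \<longrightarrow> z \<in> S \<or> c * (z - q) + q \<in> S"
  proof (cases "\<exists>q. [q] \<in> V \<and> q \<in> K")
    case True
    then obtain q where q: "[q] \<in> V" "q \<in> K" by blast
    define W where "W = {y \<in> topspace (T 1 (affine_space 1)). [c * y!0 + (q - c * q)] \<in> V} \<inter> V"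
    have Wo: "openin (T 1 (affine_space 1)) W"
      unfolding W_def using openin_continuous_map_preimage[OF affine_cont[OF T] V] V by blast
    have qW: "[q] \<in> W" unfolding W_def using q ts A1_Cons by (auto simp: algebra_simps)
    have "z \<in> S \<or> c * (z - q) + q \<in> S" if z: "[z] \<in> W" "z \<noteq> q" for z
    proof (cases "z \<in> K")
      case False then show ?thesis using z unfolding S_def W_def by auto
    next
      case True
      let ?w = "c * (z - q) + q"
      have wV: "[?w] \<in> V" using z unfolding W_def by (auto simp: algebra_simps)
      have "?w \<notin> K"
      proof
        assume wK: "?w \<in> K"
        have "c = (?w - q) / (z - q)" using z by (simp add: field_simps)
        moreover have "(?w - q) / (z - q) \<in> K"
          using subfield_div[OF K subfield_diff[OF K wK q(2)] subfield_diff[OF K True q(2)]] .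
        ultimately show False using c by simp
      qed
      then show ?thesis using wV unfolding S_def by auto
    qed
    then show ?thesis using that[OF Wo qW] by blast
  next
    case False
    obtain x where x: "x \<in> V" using Vne by blast
    have "x = [x!0]" using A1_elem x VA by (metis One_nat_def subsetD)
    then have qV: "[x!0] \<in> V" using x by simp
    have "\<forall>z. [z] \<in> V \<and> z \<noteq> x!0 \<longrightarrow> z \<in> S \<or> c * (z - x!0) + x!0 \<in> S"
      using False unfolding S_def by auto
    then show ?thesis using that[OF V qV] by blast
  qed
  define h where "h = (\<lambda>(s, b::bool). if b then s else (s - q) / c + q)"
  have hz2: "z \<in> h ` (S \<times> UNIV)" if "[z] \<in> V'" "z \<noteq> q" for z
  proof -
    have "z \<in> S \<or> c * (z - q) + q \<in> S" using hz that by blast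
    then show ?thesis
    proof
      assume "z \<in> S" then show ?thesis unfolding h_def by (intro image_eqI[of _ _ "(z, True)"]) auto
    next
      assume zs: "c * (z - q) + q \<in> S"
      have "h (c * (z - q) + q, False) = z" unfolding h_def using c0 by simp
      then show ?thesis using zs by (metis UNIV_I mem_Sigma_iff rev_image_eqI)
    qed
  qed
  define G where "G = (\<lambda>(p, r). (h r - q) / (h p - q))"
  have sub: "UNIV - {0} \<subseteq> G ` ((S \<times> UNIV) \<times> (S \<times> UNIV))"
  proof
    fix a :: 'a assume a: "a \<in> UNIV - {0}"
    obtain x where x: "[x] \<in> V'" "x \<noteq> q" "[a * (x - q) + q] \<in> V'"
      using lemA[OF T nd V' qV'] by blast
    have y: "a * (x - q) + q \<noteq> q" using a x by simp
    obtain p where p: "p \<in> S \<times> UNIV" "h p = x" using hz2[OF x(1,2)] by blast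
    obtain r where r: "r \<in> S \<times> UNIV" "h r = a * (x - q) + q" using hz2[OF x(3) y] by (metis imageE)
    have "G (p, r) = a" unfolding G_def using p r x by simp
    then show "a \<in> G ` ((S \<times> UNIV) \<times> (S \<times> UNIV))" using p r by force
  qed
  then have l1: "UNIV - {0::'a} \<lesssim> (S \<times> (UNIV::bool set)) \<times> (S \<times> (UNIV::bool set))"
    by (rule subset_image_lepoll)
  have infU: "infinite (UNIV - {0::'a})" using inf by simp
  have infS: "infinite S"
  proof
    assume "finite S"
    then have "finite ((S \<times> (UNIV::bool set)) \<times> (S \<times> (UNIV::bool set)))" by simp
    then show False using lepoll_finite_imp[OF l1] infU by blast
  qed
  have "S \<times> (UNIV::bool set) \<lesssim> S \<times> S"
    using times_lepoll_mono[OF lepoll_refl finite_lepoll_infinite[OF infS, of "UNIV::bool set"]] by simp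
  also have "\<dots> \<lesssim> S" using times_self_lepoll[OF infS] .
  finally have sb: "S \<times> (UNIV::bool set) \<lesssim> S" .
  have "(UNIV::'a set) \<approx> UNIV - {0::'a}"
    using infinite_insert_eqpoll[OF infU, of 0] by (simp add: insert_Diff_single)
  also have "\<dots> \<lesssim> (S \<times> (UNIV::bool set)) \<times> (S \<times> (UNIV::bool set))" using l1 .
  also have "\<dots> \<lesssim> S \<times> S" using times_lepoll_mono[OF sb sb] .
  also have "\<dots> \<lesssim> S" using times_self_lepoll[OF infS] .
  finally show ?thesis unfolding S_def .
qed

lemma space_lepoll:
  assumes inf: "infinite (UNIV :: 'a set)"
  shows "(affine_space m :: 'a list set) \<lesssim> (UNIV :: 'a set)"
proof (induction m)
  case 0
  have "affine_space 0 \<subseteq> (\<lambda>_::'a. ([]::'a list)) ` UNIV" by (auto simp: affine_space_def)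
  then show ?case by (rule subset_image_lepoll)
next
  case (Suc n)
  have "affine_space (Suc n) \<subseteq> (\<lambda>(a, xs). a # xs) ` ((UNIV::'a set) \<times> affine_space n)"
  proof
    fix x :: "'a list" assume "x \<in> affine_space (Suc n)"
    then obtain a xs where "x = a # xs" "length xs = n" by (cases x) (auto simp: affine_space_def)
    then show "x \<in> (\<lambda>(a, xs). a # xs) ` ((UNIV::'a set) \<times> affine_space n)"
      by (auto simp: affine_space_def)
  qed
  then have "(affine_space (Suc n) :: 'a list set) \<lesssim> (UNIV::'a set) \<times> (affine_space n :: 'a list set)" by (rule subset_image_lepoll)
  also have "\<dots> \<lesssim> (UNIV::'a set) \<times> (UNIV::'a set)" using times_lepoll_mono[OF lepoll_refl Suc] .
  also have "\<dots> \<lesssim> (UNIV::'a set)" using times_self_lepoll[OF inf] .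
  finally show ?case .
qed


theorem propositionB:
  fixes T :: "nat \<Rightarrow> 'a::field list set \<Rightarrow> 'a list topology"
    and K :: "'a set" and m :: nat and U :: "'a list set"
  assumes "infinite (UNIV :: 'a set)"
    and "affine_system_of_topologies T"
    and "non_discrete T"
    and "is_subfield K" and "K \<noteq> UNIV"
    and "m \<ge> 1"
    and "openin (T m (affine_space m)) U" and "U \<noteq> {}"
  shows "U - {x \<in> affine_space m. set x \<subseteq> K} \<approx> (UNIV :: 'a set)"
proof (rule lepoll_antisym)
  note T = assms(2)
  have UA: "U \<subseteq> affine_space m" using openin_subset[OF assms(7)] topspace1[OF T] by simp
  show "U - {x \<in> affine_space m. set x \<subseteq> K} \<lesssim> (UNIV :: 'a set)"
    using lepoll_trans[OF subset_imp_lepoll space_lepoll[OF assms(1)]] UA by blast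
  obtain p where p: "p \<in> U" using assms(8) by blast
  have lp: "length p = m" using p UA by (auto simp: affine_space_def)
  define V where "V = {y \<in> topspace (T 1 (affine_space 1)). y!0 # tl p \<in> U}"
  have V: "openin (T 1 (affine_space 1)) V"
    unfolding V_def using openin_continuous_map_preimage[OF line_cont[OF T lp assms(6)] assms(7)] .
  have "p!0 # tl p = p" using lp assms(6) by (cases p) auto
  then have "[p!0] \<in> V" unfolding V_def using topspace1[OF T] A1_Cons p by simp
  then have Vne: "V \<noteq> {}" by blast
  have "(UNIV :: 'a set) \<lesssim> {t. [t] \<in> V \<and> t \<notin> K}"
    using lower1[OF T assms(3) assms(1) assms(4) assms(5) V Vne] .
  also have "\<dots> \<lesssim> U - {x \<in> affine_space m. set x \<subseteq> K}"
  proof (rule subset_image_lepoll[of _ "\<lambda>x. hd x" ])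
    show "{t. [t] \<in> V \<and> t \<notin> K} \<subseteq> hd ` (U - {x \<in> affine_space m. set x \<subseteq> K})"
    proof
      fix t assume t: "t \<in> {t. [t] \<in> V \<and> t \<notin> K}"
      then have "t # tl p \<in> U" unfolding V_def by simp
      moreover have "t # tl p \<notin> {x \<in> affine_space m. set x \<subseteq> K}" using t by simp
      ultimately show "t \<in> hd ` (U - {x \<in> affine_space m. set x \<subseteq> K})"
        by (intro image_eqI[of _ _ "t # tl p"]) auto
    qed
  qed
  finally show "(UNIV :: 'a set) \<lesssim> U - {x \<in> affine_space m. set x \<subseteq> K}" .
qed

end
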